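(* The multiset $\{1,1,1,-1\}$ is not the spectrum of any completely positive trace-preserving linear map on $\mathcal{M}_2(\mathbb{C})$, but there is a completely positive trace-preserving linear map $T$ on $\mathcal{M}_4(\mathbb{C})$ with $\mathrm{spec}(T)\setminus\{0\}=\{1,1,1,-1\}$.
   Context: $\mathrm{spec}(T)$ is the spectrum of $T$ as an operator on $\mathcal{M}_d(\mathbb{C})$ counted with algebraic multiplicity; $\mathrm{spec}(T)\setminus\{0\}$ removes all zeros. Completely positive: $T\otimes\mathrm{id}$ maps positive semidefinite matrices to positive semidefinite ones; trace-preserving: $\mathrm{tr}[T(X)]=\mathrm{tr}[X]$. *)

theory Defs
  imports "Jordan_Normal_Form.Matrix" "Jordan_Normal_Form.Char_Poly"
begin

definition lin_map_Md :: "nat \<Rightarrow> (complex mat \<Rightarrow> complex mat) \<Rightarrow> bool" where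
  "lin_map_Md d T \<longleftrightarrow>
     (\<forall>X \<in> carrier_mat d d. T X \<in> carrier_mat d d) \<and>
     (\<forall>X \<in> carrier_mat d d. \<forall>Y \<in> carrier_mat d d. T (X + Y) = T X + T Y) \<and>
     (\<forall>c. \<forall>X \<in> carrier_mat d d. T (c \<cdot>\<^sub>m X) = c \<cdot>\<^sub>m T X)"

definition unit_mat :: "nat \<Rightarrow> nat \<Rightarrow> nat \<Rightarrow> complex mat" where
  "unit_mat d i j = mat d d (\<lambda>(a, b). if a = i \<and> b = j then 1 else 0)"

text \<open>Matrix of T w.r.t. the basis (E_ij), index i*d+j (row-major vectorisation).\<close>
definition rep_mat :: "nat \<Rightarrow> (complex mat \<Rightarrow> complex mat) \<Rightarrow> complex mat" where
  "rep_mat d T = mat (d*d) (d*d)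
     (\<lambda>(r, s). T (unit_mat d (s div d) (s mod d)) $$ (r div d, r mod d))"

definition spec_op :: "nat \<Rightarrow> (complex mat \<Rightarrow> complex mat) \<Rightarrow> complex multiset" where
  "spec_op d T = proots (char_poly (rep_mat d T))"

definition psd :: "nat \<Rightarrow> complex mat \<Rightarrow> bool" where
  "psd n A \<longleftrightarrow> A \<in> carrier_mat n n \<and>
     (\<forall>v :: nat \<Rightarrow> complex. \<exists>r::real. r \<ge> 0 \<and>
        (\<Sum>i<n. \<Sum>j<n. cnj (v i) * A $$ (i, j) * v j) = complex_of_real r)"

text \<open>(T \<otimes> id_k) applied to X \<in> M_d \<otimes> M_k = M_{dk}, index (i,a) \<mapsto> i*k+a.\<close>
definition tensor_id :: "nat \<Rightarrow> nat \<Rightarrow> (complex mat \<Rightarrow> complex mat) \<Rightarrow> complex mat \<Rightarrow> complex mat" where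
  "tensor_id d k T X = mat (d*k) (d*k) (\<lambda>(r, s).
      T (mat d d (\<lambda>(i, j). X $$ (i*k + r mod k, j*k + s mod k))) $$ (r div k, s div k))"

definition completely_positive :: "nat \<Rightarrow> (complex mat \<Rightarrow> complex mat) \<Rightarrow> bool" where
  "completely_positive d T \<longleftrightarrow>
     (\<forall>k. \<forall>X. psd (d*k) X \<longrightarrow> psd (d*k) (tensor_id d k T X))"

definition trace_preserving :: "nat \<Rightarrow> (complex mat \<Rightarrow> complex mat) \<Rightarrow> bool" where
  "trace_preserving d T \<longleftrightarrow> (\<forall>X \<in> carrier_mat d d. (\<Sum>i<d. T X $$ (i, i)) = (\<Sum>i<d. X $$ (i, i)))"

definition CPTP :: "nat \<Rightarrow> (complex mat \<Rightarrow> complex mat) \<Rightarrow> bool" where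
  "CPTP d T \<longleftrightarrow> lin_map_Md d T \<and> completely_positive d T \<and> trace_preserving d T"

end

theory Submission
  imports Defs "Jordan_Normal_Form.Schur_Decomposition"
begin


lemma sum2: "(\<Sum>i<(2::nat). f i) = f 0 + f 1"
  by (simp add: numeral_2_eq_2)
lemma sum4: "(\<Sum>i<(4::nat). f i) = f 0 + f 1 + f 2 + f 3"
  by (simp add: eval_nat_numeral)

lemma trace_comm:
  fixes A B :: "'a::comm_semiring_1 mat"
  assumes A: "A \<in> carrier_mat n m" and B: "B \<in> carrier_mat m n"
  shows "(\<Sum>i<n. (A*B) $$ (i,i)) = (\<Sum>j<m. (B*A) $$ (j,j))"
proof -
  have "(\<Sum>i<n. (A*B) $$ (i,i)) = (\<Sum>i<n. \<Sum>j<m. A $$ (i,j) * B $$ (j,i))"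
    using A B by (intro sum.cong) (auto simp: scalar_prod_def atLeast0LessThan)
  also have "\<dots> = (\<Sum>j<m. \<Sum>i<n. A $$ (i,j) * B $$ (j,i))"
    by (rule sum.swap)
  also have "\<dots> = (\<Sum>j<m. \<Sum>i<n. B $$ (j,i) * A $$ (i,j))"
    by (rule sum.cong[OF refl], rule sum.cong[OF refl], rule mult.commute)
  also have "\<dots> = (\<Sum>j<m. (B*A) $$ (j,j))"
    using A B by (intro sum.cong) (auto simp: scalar_prod_def atLeast0LessThan)
  finally show ?thesis .
qed

lemma trace_similar:
  fixes A B :: "'a::comm_ring_1 mat"
  assumes A: "A \<in> carrier_mat n n" and S: "similar_mat_wit A B P Q"
  shows "(\<Sum>i<n. A $$ (i,i)) = (\<Sum>i<n. B $$ (i,i))"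
proof -
  from S A have B: "B \<in> carrier_mat n n" and P: "P \<in> carrier_mat n n" and Q: "Q \<in> carrier_mat n n"
    and QP: "Q * P = 1\<^sub>m n" and AB: "A = P * B * Q"
    unfolding similar_mat_wit_def Let_def by auto
  have "A = P * (B * Q)" using AB B P Q by (simp add: assoc_mult_mat[of _ n n _ n _ n])
  hence "(\<Sum>i<n. A $$ (i,i)) = (\<Sum>i<n. ((B * Q) * P) $$ (i,i))"
    using trace_comm[OF P, of "B*Q"] B Q by auto
  also have "(B * Q) * P = B * (Q * P)" using B P Q by (simp add: assoc_mult_mat[of _ n n _ n _ n])
  also have "\<dots> = B" using QP B by simp
  finally show ?thesis .
qed

lemma psd_herm:
  assumes "psd n A" "i < n" "j < n"
  shows "A $$ (i,j) = cnj (A $$ (j,i))"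
proof -
  have real: "Im (\<Sum>a<n. \<Sum>b<n. cnj (v a) * A $$ (a, b) * v b) = 0" for v
  proof -
    from assms(1) obtain r :: real where "(\<Sum>a<n. \<Sum>b<n. cnj (v a) * A $$ (a, b) * v b) = complex_of_real r"
      unfolding psd_def by blast
    thus ?thesis by simp
  qed
  have mi: "x * (if P then y else 0) = (if P then x * y else 0)" "(if P then y else 0) * x = (if P then y * x else 0)" for x y :: complex and P
    by auto
  have ci: "cnj (if P then y else 0) = (if P then cnj y else 0)" for y and P by auto
  have inner: "(\<Sum>b<n. A $$ (a, b) * ((if b = i then \<alpha> else 0) + (if b = j then \<beta> else 0)))
      = A $$ (a,i) * \<alpha> + A $$ (a,j) * \<beta>" for a \<alpha> \<beta>
    using assms(2,3) by (simp add: distrib_left sum.distrib mi)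
  have outer: "(\<Sum>a<n. cnj ((if a = i then \<alpha> else 0) + (if a = j then \<beta> else 0)) * g a)
      = cnj \<alpha> * g i + cnj \<beta> * g j" for g \<alpha> \<beta>
    using assms(2,3) by (simp add: distrib_right sum.distrib mi ci)
  have qf: "(\<Sum>a<n. \<Sum>b<n. cnj ((if a = i then \<alpha> else 0) + (if a = j then \<beta> else 0)) * A $$ (a, b) *
        ((if b = i then \<alpha> else 0) + (if b = j then \<beta> else 0)))
      = cnj \<alpha> * (A $$ (i,i) * \<alpha> + A $$ (i,j) * \<beta>) + cnj \<beta> * (A $$ (j,i) * \<alpha> + A $$ (j,j) * \<beta>)"
    for \<alpha> \<beta>
    by (simp only: mult.assoc sum_distrib_left[symmetric] inner outer)
  have r1: "Im (A $$ (i,i)) = 0" using real[of "\<lambda>k. (if k = i then 1 else 0) + (if k = j then 0 else 0)"] unfolding qf by simp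
  have r2: "Im (A $$ (j,j)) = 0" using real[of "\<lambda>k. (if k = i then 0 else 0) + (if k = j then 1 else 0)"] unfolding qf by simp
  have r3: "Im (A $$ (i,j) + A $$ (j,i)) = 0" using real[of "\<lambda>k. (if k = i then 1 else 0) + (if k = j then 1 else 0)"] unfolding qf using r1 r2 by simp
  have r4: "Re (A $$ (i,j)) - Re (A $$ (j,i)) = 0" using real[of "\<lambda>k. (if k = i then 1 else 0) + (if k = j then \<i> else 0)"] unfolding qf using r1 r2
    by (simp add: algebra_simps)
  show ?thesis using r3 r4 by (intro complex_eqI) auto
qed



lemma core_identity1:
  fixes x y w c0000 c0100 c1000 c1100 c0001 c0101 c1001 c1101 c0010 c0110 c1010 c1110 c0011 c0111 c1011 c1111 :: complex
  assumes e00: "c0000 * x + c0100 * y + c1000 * w - c1100 * x = - x"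
  and e01: "c0001 * x + c0101 * y + c1001 * w - c1101 * x = - y"
  and e10: "c0010 * x + c0110 * y + c1010 * w - c1110 * x = - w"
  and e11: "c0011 * x + c0111 * y + c1011 * w - c1111 * x = x"
  and t00: "c0000 + c0011 = 1"
  and t11: "c1100 + c1111 = 1"
  shows "x * c0000 * x + x * c0001 * w + y * c0010 * x + y * c0011 * w
       + x * c0100 * y - x * c0101 * x + y * c0110 * y - y * c0111 * x
       + w * c1000 * x + w * c1001 * w - x * c1010 * x - x * c1011 * w
       + w * c1100 * y - w * c1101 * x + x * c1111 * x - x * c1110 * y
       = - (x*x + y*w) * (c0000 + c0101 + c1010 + c1111)"
proof -
  have "x * c0000 * x + x * c0001 * w + y * c0010 * x + y * c0011 * w
       + x * c0100 * y - x * c0101 * x + y * c0110 * y - y * c0111 * x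
       + w * c1000 * x + w * c1001 * w - x * c1010 * x - x * c1011 * w
       + w * c1100 * y - w * c1101 * x + x * c1111 * x - x * c1110 * y
       - (- (x*x + y*w) * (c0000 + c0101 + c1010 + c1111))
     = x * ((c0000 * x + c0100 * y + c1000 * w - c1100 * x) + x)
     + w * ((c0001 * x + c0101 * y + c1001 * w - c1101 * x) + y)
     + y * ((c0010 * x + c0110 * y + c1010 * w - c1110 * x) + w)
     - x * ((c0011 * x + c0111 * y + c1011 * w - c1111 * x) - x)
     + (x*x + y*w) * (c0000 + c0011 - 1) + (x*x + y*w) * (c1100 + c1111 - 1)"
    by (simp add: algebra_simps)
  also have "\<dots> = 0" using assms by simp
  finally show ?thesis by simp
qed

lemma neg_self: "(a::complex) = - a \<Longrightarrow> a = 0" by simp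

lemma core:
  fixes c :: "nat \<Rightarrow> nat \<Rightarrow> nat \<Rightarrow> nat \<Rightarrow> complex" and H :: "nat \<Rightarrow> nat \<Rightarrow> complex"
  assumes tp: "\<And>a b. a < 2 \<Longrightarrow> b < 2 \<Longrightarrow> c a b 0 0 + c a b 1 1 = (if a = b then 1 else 0)"
  and eig: "\<And>p q. p < 2 \<Longrightarrow> q < 2 \<Longrightarrow> (\<Sum>i<2. \<Sum>j<2. c i j p q * H i j) = - H p q"
  and herm: "\<And>i j. i < 2 \<Longrightarrow> j < 2 \<Longrightarrow> H i j = cnj (H j i)"
  and nz: "\<exists>i<2. \<exists>j<2. H i j \<noteq> 0"
  and psdC: "\<And>v. \<exists>r::real. r \<ge> 0 \<and> (\<Sum>r<4. \<Sum>s<4. cnj (v r) * c (r mod 2) (s mod 2) (r div 2) (s div 2) * v s) = complex_of_real r"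
  and tr: "(\<Sum>a<2. \<Sum>b<2. c a b a b) = 2"
  shows False
proof -
  have t00: "c 0 0 0 0 + c 0 0 1 1 = 1" using tp[of 0 0] by simp
  have t11: "c 1 1 0 0 + c 1 1 1 1 = 1" using tp[of 1 1] by simp
  have t01: "c 0 1 0 0 + c 0 1 1 1 = 0" using tp[of 0 1] by simp
  have t10: "c 1 0 0 0 + c 1 0 1 1 = 0" using tp[of 1 0] by simp
  have E: "c 0 0 p q * H 0 0 + c 0 1 p q * H 0 1 + c 1 0 p q * H 1 0 + c 1 1 p q * H 1 1 = - H p q"
    if "p < 2" "q < 2" for p q using eig[OF that] by (simp add: sum2 add.assoc)
  have h00: "H 0 0 = cnj (H 0 0)" by (rule herm) auto
  have h10: "H 1 0 = cnj (H 0 1)" by (rule herm) auto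
  have "H 0 0 + H 1 1 = - (H 0 0 + H 1 1)"
  proof -
    have "H 0 0 + H 1 1 = (c 0 0 0 0 + c 0 0 1 1) * H 0 0 + (c 0 1 0 0 + c 0 1 1 1) * H 0 1
        + (c 1 0 0 0 + c 1 0 1 1) * H 1 0 + (c 1 1 0 0 + c 1 1 1 1) * H 1 1"
      using t00 t11 t01 t10 by simp
    also have "\<dots> = (c 0 0 0 0 * H 0 0 + c 0 1 0 0 * H 0 1 + c 1 0 0 0 * H 1 0 + c 1 1 0 0 * H 1 1)
       + (c 0 0 1 1 * H 0 0 + c 0 1 1 1 * H 0 1 + c 1 0 1 1 * H 1 0 + c 1 1 1 1 * H 1 1)"
      by (simp add: algebra_simps)
    also have "\<dots> = - H 0 0 - H 1 1" using E[of 0 0] E[of 1 1] by simp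
    finally show ?thesis by simp
  qed
  hence "H 0 0 + H 1 1 = 0" by (rule neg_self)
  hence h11': "H 1 1 = - H 0 0" by (simp add: add_eq_0_iff2 add.commute)
  define x where "x = H 0 0"
  define y where "y = H 0 1"
  define w where "w = H 1 0"
  have xr: "cnj x = x" unfolding x_def by (rule h00[symmetric])
  have wy: "w = cnj y" "cnj w = y" using h10 w_def y_def by auto
  have E00: "c 0 0 0 0 * x + c 0 1 0 0 * y + c 1 0 0 0 * w - c 1 1 0 0 * x = - x"
    using E[of 0 0] h11' unfolding x_def y_def w_def by simp
  have E01: "c 0 0 0 1 * x + c 0 1 0 1 * y + c 1 0 0 1 * w - c 1 1 0 1 * x = - y"
    using E[of 0 1] h11' unfolding x_def y_def w_def by simp
  have E10: "c 0 0 1 0 * x + c 0 1 1 0 * y + c 1 0 1 0 * w - c 1 1 1 0 * x = - w"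
    using E[of 1 0] h11' unfolding x_def y_def w_def by simp
  have E11: "c 0 0 1 1 * x + c 0 1 1 1 * y + c 1 0 1 1 * w - c 1 1 1 1 * x = x"
    using E[of 1 1] h11' unfolding x_def y_def w_def by simp
  define u where "u = (\<lambda>r::nat. H (r div 2) (r mod 2))"
  obtain r :: real where r: "r \<ge> 0"
    "(\<Sum>r<4. \<Sum>s<4. cnj (u r) * c (r mod 2) (s mod 2) (r div 2) (s div 2) * u s) = complex_of_real r"
    using psdC by blast
  have u: "u 0 = x" "u (Suc 0) = y" "u 2 = w" "u 3 = - x" 
    unfolding u_def x_def y_def w_def using h11' by auto
  have Q: "(\<Sum>r<4. \<Sum>s<4. cnj (u r) * c (r mod 2) (s mod 2) (r div 2) (s div 2) * u s) = 
      - (x*x + y*w) * (c 0 0 0 0 + c 0 1 0 1 + c 1 0 1 0 + c 1 1 1 1)"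
    using core_identity1[OF E00 E01 E10 E11 t00 t11]
    by (simp add: sum4 u xr wy(1)[symmetric] wy(2) algebra_simps)
  have trc: "c 0 0 0 0 + c 0 1 0 1 + c 1 0 1 0 + c 1 1 1 1 = 2" using tr by (simp add: sum2 add.assoc)
  have "Im x = 0" using xr by (simp add: complex_eq_iff)
  hence xre: "x = complex_of_real (Re x)" by (simp add: complex_eq_iff)
  have yw: "y * w = complex_of_real ((cmod y)^2)" by (simp only: wy(1) complex_norm_square)
  define s where "s = (Re x)^2 + (cmod y)^2"
  have xs: "x*x + y*w = complex_of_real s"
    unfolding s_def yw by (subst (1 2) xre) (simp add: power2_eq_square)
  have "s \<noteq> 0"
  proof
    assume "s = 0"
    hence "Re x = 0" "cmod y = 0" unfolding s_def by (auto simp: add_nonneg_eq_0_iff)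
    hence "x = 0" "y = 0" using xre by auto
    hence "H 0 0 = 0" "H 0 1 = 0" "H 1 0 = 0" "H 1 1 = 0" using h11' h10 unfolding x_def y_def by auto
    with nz show False by (auto simp: less_2_cases_iff)
  qed
  moreover have "s \<ge> 0" unfolding s_def by simp
  ultimately have spos: "s > 0" by simp
  have "complex_of_real r = - (x*x + y*w) * (c 0 0 0 0 + c 0 1 0 1 + c 1 0 1 0 + c 1 1 1 1)"
    using r(2) Q by simp
  also have "\<dots> = - complex_of_real s * 2" by (simp only: xs trc)
  also have "\<dots> = complex_of_real (- 2 * s)" by simp
  finally have "complex_of_real r = complex_of_real (- 2 * s)" .
  hence "r = -2 * s" by (simp only: of_real_eq_iff)
  with r(1) spos show False by simp
qed



lemma mset_linear_factors: "sum_list (map (\<lambda>a. {#a#}) as) = mset as"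
  by (induction as) auto

lemma proots_linear_prod: "proots (\<Prod>a\<leftarrow>as. [:- a, 1:]) = mset (as :: complex list)"
proof -
  have "proots (\<Prod>a\<leftarrow>as. [:- a, 1:]) = (\<Sum>p\<leftarrow>map (\<lambda>a. [:- a, 1:]) as. proots p)"
    by (subst proots_prod_list[symmetric]) (auto simp: comp_def)
  also have "\<dots> = sum_list (map (\<lambda>a. {#a#}) as)" by (simp add: comp_def)
  finally show ?thesis by (simp add: mset_linear_factors)
qed

lemma part1:
  assumes cptp: "CPTP 2 T" and sp: "spec_op 2 T = {#1, 1, 1, -1#}"
  shows False
proof -
  from cptp have lin: "lin_map_Md 2 T" and cp: "completely_positive 2 T" and tpT: "trace_preserving 2 T"
    unfolding CPTP_def by auto
  define c where "c a b p q = T (unit_mat 2 a b) $$ (p,q)" for a b p q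
  define R where "R = rep_mat 2 T"
  have Rc: "R \<in> carrier_mat 4 4" unfolding R_def rep_mat_def by simp
  have Rij: "R $$ (r,s) = c (s div 2) (s mod 2) (r div 2) (r mod 2)" if "r < 4" "s < 4" for r s
    using that unfolding R_def rep_mat_def c_def by simp
  have tp: "c a b 0 0 + c a b 1 1 = (if a = b then 1 else 0)" if "a < 2" "b < 2" for a b
  proof -
    have "unit_mat 2 a b \<in> carrier_mat 2 2" unfolding unit_mat_def by simp
    with tpT have "(\<Sum>i<2. T (unit_mat 2 a b) $$ (i, i)) = (\<Sum>i<2. unit_mat 2 a b $$ (i, i))"
      unfolding trace_preserving_def by blast
    thus ?thesis using that unfolding c_def by (auto simp: sum2 unit_mat_def)
  qed
  define Om where "Om = mat 4 4 (\<lambda>(r,s). if r div 2 = r mod 2 \<and> s div 2 = s mod 2 then (1::complex) else 0)"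
  have psdOm: "psd 4 Om"
    unfolding psd_def
  proof (intro conjI allI)
    show "Om \<in> carrier_mat 4 4" unfolding Om_def by simp
    fix v :: "nat \<Rightarrow> complex"
    have "(\<Sum>i<4. \<Sum>j<4. cnj (v i) * Om $$ (i, j) * v j) = (v 0 + v 3) * cnj (v 0 + v 3)"
      unfolding Om_def by (simp add: sum4 algebra_simps)
    also have "\<dots> = complex_of_real ((cmod (v 0 + v 3))^2)" by (simp only: complex_norm_square)
    finally show "\<exists>r. 0 \<le> r \<and> (\<Sum>i<4. \<Sum>j<4. cnj (v i) * Om $$ (i, j) * v j) = complex_of_real r"
      by (intro exI[of _ "(cmod (v 0 + v 3))^2"]) simp
  qed
  define C where "C = tensor_id 2 2 T Om"
  have psdC: "psd 4 C" using cp psdOm unfolding completely_positive_def C_def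
    by (metis mult_2 numeral_Bit0)
  have Cij: "C $$ (r,s) = c (r mod 2) (s mod 2) (r div 2) (s div 2)" if "r < 4" "s < 4" for r s
  proof -
    have "mat 2 2 (\<lambda>(i, j). Om $$ (i * 2 + r mod 2, j * 2 + s mod 2)) = unit_mat 2 (r mod 2) (s mod 2)"
      unfolding unit_mat_def Om_def by (rule eq_matI) auto
    thus ?thesis using that unfolding C_def tensor_id_def c_def by simp
  qed
  have psdCc: "\<exists>r::real. r \<ge> 0 \<and> (\<Sum>r<4. \<Sum>s<4. cnj (v r) * c (r mod 2) (s mod 2) (r div 2) (s div 2) * v s) = complex_of_real r" for v
  proof -
    from psdC obtain r :: real where "r \<ge> 0" "(\<Sum>i<4. \<Sum>j<4. cnj (v i) * C $$ (i, j) * v j) = complex_of_real r"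
      unfolding psd_def by blast
    moreover have "(\<Sum>i<4. \<Sum>j<4. cnj (v i) * C $$ (i, j) * v j) = (\<Sum>r<4. \<Sum>s<4. cnj (v r) * c (r mod 2) (s mod 2) (r div 2) (s div 2) * v s)"
      by (intro sum.cong refl) (simp add: Cij)
    ultimately show ?thesis by auto
  qed
  have herm: "c a b p q = cnj (c b a q p)" if "a < 2" "b < 2" "p < 2" "q < 2" for a b p q
  proof -
    have "C $$ (2*p+a, 2*q+b) = cnj (C $$ (2*q+b, 2*p+a))"
      by (rule psd_herm[OF psdC]) (use that in auto)
    thus ?thesis using that by (simp add: Cij)
  qed
  obtain as where cpas: "char_poly R = (\<Prod>a\<leftarrow>as. [:- a, 1:])" and las: "length as = 4"
    using char_poly_factorized[OF Rc] by blast
  have mas: "mset as = {#1, 1, 1, -1#}"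
    using sp unfolding spec_op_def R_def[symmetric] cpas proots_linear_prod .
  have sas: "sum_list as = 2"
  proof -
    have "sum_list as = sum_mset (mset as)" by (simp add: sum_mset_sum_list)
    also have "\<dots> = 2" unfolding mas by simp
    finally show ?thesis .
  qed
  obtain B P Q where sd: "schur_decomposition R as = (B,P,Q)" by (cases "schur_decomposition R as") auto
  from schur_decomposition[OF Rc cpas sd] have sim: "similar_mat_wit R B P Q" and dB: "diag_mat B = as" by auto
  have Bc: "B \<in> carrier_mat 4 4" using sim Rc unfolding similar_mat_wit_def Let_def by auto
  have "(\<Sum>i<4. R $$ (i,i)) = (\<Sum>i<4. B $$ (i,i))" by (rule trace_similar[OF Rc sim])
  also have "\<dots> = sum_list (diag_mat B)"
    using Bc unfolding diag_mat_def by (simp add: sum_set_upt_conv_sum_list_nat[symmetric] atLeast0LessThan)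
  finally have trR: "(\<Sum>i<4. R $$ (i,i)) = 2" using dB sas by simp
  have tr: "(\<Sum>a<2. \<Sum>b<2. c a b a b) = 2"
    using trR by (simp add: sum4 sum2 Rij add.assoc)
  have "-1 \<in> set_mset (proots (char_poly R))" using sp unfolding spec_op_def R_def by simp
  moreover have "char_poly R \<noteq> 0" using degree_monic_char_poly[OF Rc] by auto
  ultimately have "poly (char_poly R) (-1) = 0" by simp
  hence "eigenvalue R (-1)" using eigenvalue_root_char_poly[OF Rc] by simp
  then obtain y where ev: "eigenvector R y (-1)" unfolding eigenvalue_def by blast
  hence yc: "y \<in> carrier_vec 4" and y0: "y \<noteq> 0\<^sub>v 4" and Ry: "R *\<^sub>v y = (-1) \<cdot>\<^sub>v y"
    unfolding eigenvector_def using Rc by auto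
  define Y where "Y i j = y $ (2*i+j)" for i j
  have eigY: "(\<Sum>i<2. \<Sum>j<2. c i j p q * Y i j) = - Y p q" if "p < 2" "q < 2" for p q
  proof -
    have "(R *\<^sub>v y) $ (2*p+q) = ((-1) \<cdot>\<^sub>v y) $ (2*p+q)" using Ry by simp
    moreover have "(R *\<^sub>v y) $ (2*p+q) = (\<Sum>s<4. R $$ (2*p+q, s) * y $ s)"
      using Rc yc that by (simp add: scalar_prod_def atLeast0LessThan)
    moreover have "\<dots> = (\<Sum>i<2. \<Sum>j<2. c i j p q * Y i j)"
      using that by (simp add: sum4 sum2 Rij Y_def add.assoc)
    ultimately show ?thesis using yc that by (simp add: Y_def)
  qed
  have Ynz: "\<exists>i<2. \<exists>j<2. Y i j \<noteq> 0"
  proof (rule ccontr)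
    assume "\<not> ?thesis"
    hence Y0: "Y i j = 0" if "i < 2" "j < 2" for i j using that by auto
    have "y = 0\<^sub>v 4"
    proof (rule eq_vecI)
      fix s assume "s < dim_vec (0\<^sub>v 4 :: complex vec)"
      hence s: "s < 4" by simp
      have "y $ s = Y (s div 2) (s mod 2)" unfolding Y_def by simp
      also have "\<dots> = 0" using s by (intro Y0) auto
      finally show "y $ s = 0\<^sub>v 4 $ s" using s by simp
    qed (use yc in auto)
    with y0 show False by simp
  qed
  have eigYs: "(\<Sum>i<2. \<Sum>j<2. c i j p q * cnj (Y j i)) = - cnj (Y q p)" if "p < 2" "q < 2" for p q
  proof -
    have "(\<Sum>i<2. \<Sum>j<2. c i j p q * cnj (Y j i)) = cnj (\<Sum>i<2. \<Sum>j<2. c i j q p * Y i j)"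
      using that by (simp add: sum2 herm[of _ _ p q] algebra_simps)
    also have "\<dots> = - cnj (Y q p)" using eigY[of q p] that by simp
    finally show ?thesis .
  qed
  define G where "G i j = Y i j + cnj (Y j i)" for i j
  define K where "K i j = \<i> * (Y i j - cnj (Y j i))" for i j
  have eigG: "(\<Sum>i<2. \<Sum>j<2. c i j p q * G i j) = - G p q" if "p < 2" "q < 2" for p q
    using eigY[OF that] eigYs[OF that] unfolding G_def
    by (simp add: distrib_left sum.distrib)
  have eigK: "(\<Sum>i<2. \<Sum>j<2. c i j p q * K i j) = - K p q" if "p < 2" "q < 2" for p q
  proof -
    have "(\<Sum>i<2. \<Sum>j<2. c i j p q * K i j) = \<i> * ((\<Sum>i<2. \<Sum>j<2. c i j p q * Y i j) - (\<Sum>i<2. \<Sum>j<2. c i j p q * cnj (Y j i)))"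
      unfolding K_def by (simp add: sum2 algebra_simps)
    thus ?thesis using eigY[OF that] eigYs[OF that] unfolding K_def by (simp add: algebra_simps)
  qed
  have hG: "G i j = cnj (G j i)" if "i < 2" "j < 2" for i j unfolding G_def by simp
  have hK: "K i j = cnj (K j i)" if "i < 2" "j < 2" for i j unfolding K_def by (simp add: algebra_simps)
  have "(\<exists>i<2. \<exists>j<2. G i j \<noteq> 0) \<or> (\<exists>i<2. \<exists>j<2. K i j \<noteq> 0)"
  proof (rule ccontr)
    assume "\<not> ?thesis"
    hence G0: "G i j = 0" and K0: "K i j = 0" if "i < 2" "j < 2" for i j using that by auto
    have GK: "2 * Y i j = G i j - \<i> * K i j" for i j
      unfolding G_def K_def by (simp add: algebra_simps)
    have "Y i j = 0" if "i < 2" "j < 2" for i j using GK[of i j] G0[OF that] K0[OF that] by simp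
    with Ynz show False by auto
  qed
  thus False
  proof
    assume "\<exists>i<2. \<exists>j<2. G i j \<noteq> 0"
    from core[of c G, OF tp eigG hG this psdCc tr] show False .
  next
    assume "\<exists>i<2. \<exists>j<2. K i j \<noteq> 0"
    from core[of c K, OF tp eigK hK this psdCc tr] show False .
  qed
qed



lemma char_poly_block_diag:
  fixes A1 :: "'a :: idom mat"
  assumes A1: "A1 \<in> carrier_mat n n" and A2: "A2 \<in> carrier_mat n m" and A3: "A3 \<in> carrier_mat m m"
  shows "char_poly (four_block_mat A1 A2 (0\<^sub>m m n) A3) = char_poly A1 * char_poly A3"
proof -
  let ?cm = "\<lambda> A. [:0, 1:] \<cdot>\<^sub>m 1\<^sub>m (dim_row A) + map_mat (\<lambda>a. [:- a:]) A"
  let ?B2 = "map_mat (\<lambda>a. [:- a:]) A2"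
  have "char_poly (four_block_mat A1 A2 (0\<^sub>m m n) A3) = det (?cm (four_block_mat A1 A2 (0\<^sub>m m n) A3))"
    unfolding char_poly_defs using A1 A3 by simp
  also have "?cm (four_block_mat A1 A2 (0\<^sub>m m n) A3) = four_block_mat (?cm A1) ?B2 (0\<^sub>m m n) (?cm A3)"
    by (rule eq_matI, insert A1 A2 A3, auto simp: one_poly_def)
  also have "det \<dots> = det (?cm A1) * det (?cm A3)"
    by (rule det_four_block_mat_lower_left_zero[OF _ _ refl], insert A1 A2 A3, auto)
  also have "\<dots> = char_poly A1 * char_poly A3" unfolding char_poly_defs ..
  finally show ?thesis .
qed

definition Wm :: "nat \<Rightarrow> complex mat" where
  "Wm n = mat (n+2) (n+2) (\<lambda>(i,j). if (i = 0 \<and> j = n+1) \<or> (i = n+1 \<and> j = 0) then 1 else 0)"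

lemma Wm_carrier: "Wm n \<in> carrier_mat (n+2) (n+2)" unfolding Wm_def by simp

lemma char_poly_Wm0: "char_poly (Wm 0) = [:-1,1:] * [:1,1:]"
proof -
  define P :: "complex mat" where "P = mat 2 2 (\<lambda>(i,j). if i = 1 \<and> j = 1 then -1 else 1)"
  define Q :: "complex mat" where "Q = mat 2 2 (\<lambda>(i,j). if i = 1 \<and> j = 1 then -1/2 else 1/2)"
  define B :: "complex mat" where "B = mat 2 2 (\<lambda>(i,j). if i = j then (if i = 0 then 1 else -1) else 0)"
  have PQ: "P * Q = 1\<^sub>m 2" unfolding P_def Q_def
    by (rule eq_matI) (auto simp: scalar_prod_def sum2 less_2_cases_iff atLeast0LessThan)
  have QP: "Q * P = 1\<^sub>m 2" unfolding P_def Q_def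
    by (rule eq_matI) (auto simp: scalar_prod_def sum2 less_2_cases_iff atLeast0LessThan)
  have W: "Wm 0 = P * B * Q" unfolding P_def Q_def B_def Wm_def
    by (rule eq_matI) (auto simp: scalar_prod_def sum2 less_2_cases_iff atLeast0LessThan)
  have "similar_mat (Wm 0) B" unfolding similar_mat_def similar_mat_wit_def
  proof (rule exI[of _ P], rule exI[of _ Q])
    have "P \<in> carrier_mat 2 2" "Q \<in> carrier_mat 2 2" "B \<in> carrier_mat 2 2" "Wm 0 \<in> carrier_mat 2 2"
      unfolding P_def Q_def B_def Wm_def by auto
    thus "let n = dim_row (Wm 0) in {Wm 0, B, P, Q} \<subseteq> carrier_mat n n \<and> P * Q = 1\<^sub>m n \<and> Q * P = 1\<^sub>m n \<and> Wm 0 = P * B * Q"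
      using PQ QP W by (simp add: Let_def)
  qed
  hence "char_poly (Wm 0) = char_poly B" by (rule char_poly_similar)
  also have "\<dots> = (\<Prod>a\<leftarrow>diag_mat B. [:- a, 1:])"
    by (rule char_poly_upper_triangular[of _ 2]) (auto simp: B_def upper_triangular_def)
  also have "\<dots> = [:-1,1:] * [:1,1:]" by (simp add: B_def diag_mat_def upt_rec)
  finally show ?thesis .
qed

lemma char_poly_Wm: "char_poly (Wm n) = [:0,1:]^n * ([:-1,1:] * [:1,1:])"
proof (induction n)
  case 0 thus ?case by (simp add: char_poly_Wm0)
next
  case (Suc n)
  have "char_poly (Wm (Suc n)) = monom 1 1 * char_poly (mat_delete (Wm (Suc n)) 1 1)"
    by (rule char_poly_0_column[of "Suc n + 2"]) (auto simp: Wm_def)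
  also have "mat_delete (Wm (Suc n)) 1 1 = Wm n"
    unfolding mat_delete_def Wm_def by (rule eq_matI) auto
  also have "monom 1 1 = ([:0,1:] :: complex poly)" by (simp only: x_as_monom)
  also note Suc.IH
  finally show ?case by (simp only: power_Suc mult.assoc)
qed



definition swp :: "nat \<Rightarrow> nat" where "swp i = (if i = 2 then 3 else if i = 3 then 2 else i)"
definition T4 :: "complex mat \<Rightarrow> complex mat" where
  "T4 X = mat 4 4 (\<lambda>(i,j). if i = j then X $$ (swp i, swp i) else 0)"

lemma swp_lt: "i < 4 \<Longrightarrow> swp i < 4" unfolding swp_def by auto

lemma enum16: "(r::nat) < 16 \<Longrightarrow> r \<in> {0,1,2,3,4,5,6,7,8,9,10,11,12,13,14,15}"
  by (auto simp: less_Suc_eq numeral_eq_Suc)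

lemma cond16: "r < 16 \<Longrightarrow> s < 16 \<Longrightarrow>
  (r div 4 = r mod 4 \<and> swp (r div 4) = s div 4 \<and> swp (r div 4) = s mod 4) \<longleftrightarrow>
  ((r = 0 \<and> s = 0) \<or> (r = 5 \<and> s = 5) \<or> (r = 10 \<and> s = 15) \<or> (r = 15 \<and> s = 10))"
  apply (drule enum16, drule enum16)
  apply (simp only: insert_iff empty_iff)
  apply (elim disjE)
  apply (simp_all add: swp_def)
  done

definition D10 :: "complex mat" where
  "D10 = mat 10 10 (\<lambda>(i,j). if i = j \<and> (i = 0 \<or> i = 5) then 1 else 0)"

lemma rep_T4: "rep_mat 4 T4 = four_block_mat D10 (0\<^sub>m 10 6) (0\<^sub>m 6 10) (Wm 4)"
proof (rule eq_matI)
  show "dim_row (rep_mat 4 T4) = dim_row (four_block_mat D10 (0\<^sub>m 10 6) (0\<^sub>m 6 10) (Wm 4))"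
    by (simp add: rep_mat_def D10_def Wm_def)
  show "dim_col (rep_mat 4 T4) = dim_col (four_block_mat D10 (0\<^sub>m 10 6) (0\<^sub>m 6 10) (Wm 4))"
    by (simp add: rep_mat_def D10_def Wm_def)
  fix r s assume "r < dim_row (four_block_mat D10 (0\<^sub>m 10 6) (0\<^sub>m 6 10) (Wm 4))"
    "s < dim_col (four_block_mat D10 (0\<^sub>m 10 6) (0\<^sub>m 6 10) (Wm 4))"
  hence r: "r < 16" and s: "s < 16" by (simp_all add: D10_def Wm_def)
  have r4: "r div 4 < 4" "s div 4 < 4" "s mod 4 < 4" using r s by auto
  have "rep_mat 4 T4 $$ (r,s) = (if r div 4 = r mod 4 \<and> swp (r div 4) = s div 4 \<and> swp (r div 4) = s mod 4 then 1 else 0)"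
    using r s r4 swp_lt[OF r4(1)] unfolding rep_mat_def T4_def unit_mat_def by auto
  also have "\<dots> = (if (r = 0 \<and> s = 0) \<or> (r = 5 \<and> s = 5) \<or> (r = 10 \<and> s = 15) \<or> (r = 15 \<and> s = 10) then 1 else 0)"
    using cond16[OF r s] by simp
  also have "\<dots> = four_block_mat D10 (0\<^sub>m 10 6) (0\<^sub>m 6 10) (Wm 4) $$ (r, s)"
    using r s by (auto simp: D10_def Wm_def)
  finally show "rep_mat 4 T4 $$ (r,s) = four_block_mat D10 (0\<^sub>m 10 6) (0\<^sub>m 6 10) (Wm 4) $$ (r, s)" .
qed

lemma char_poly_T4: "char_poly (rep_mat 4 T4) = (\<Prod>a\<leftarrow>diag_mat D10 @ replicate 4 0 @ [1,-1]. [:- a, 1:])"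
proof -
  have "char_poly (rep_mat 4 T4) = char_poly D10 * char_poly (Wm 4)"
    unfolding rep_T4 by (rule char_poly_block_diag) (auto simp: D10_def Wm_def)
  also have "char_poly D10 = (\<Prod>a\<leftarrow>diag_mat D10. [:- a, 1:])"
    by (rule char_poly_upper_triangular[of _ 10]) (auto simp: D10_def upper_triangular_def)
  finally show ?thesis by (simp add: char_poly_Wm prod_list_replicate)
qed

lemma spec_T4: "filter_mset (\<lambda>z. z \<noteq> 0) (spec_op 4 T4) = {#1, 1, 1, -1#}"
proof -
  have "diag_mat D10 = [1,0,0,0,0,1,0,0,0,0]"
    by (simp add: D10_def diag_mat_def upt_rec)
  thus ?thesis unfolding spec_op_def char_poly_T4 proots_linear_prod by simp
qed



lemma sum_split: "(\<Sum>r<n*k. (f::nat \<Rightarrow> 'b::comm_monoid_add) r) = (\<Sum>p<n. \<Sum>a<k. f (p*k+a))"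
proof -
  have "(\<Sum>r<n*k. f r) = (\<Sum>p<n. sum f {p*k..<p*k+k})" by (rule sum.nat_group[symmetric])
  also have "\<dots> = (\<Sum>p<n. \<Sum>a<k. f (p*k+a))"
  proof (rule sum.cong[OF refl])
    fix p
    show "sum f {p*k..<p*k+k} = (\<Sum>a<k. f (p*k+a))"
      using sum.shift_bounds_nat_ivl[of f 0 "p*k" k] by (simp add: atLeast0LessThan add.commute)
  qed
  finally show ?thesis .
qed

definition qf :: "nat \<Rightarrow> complex mat \<Rightarrow> (nat \<Rightarrow> complex) \<Rightarrow> complex" where
  "qf n A v = (\<Sum>r<n. \<Sum>s<n. cnj (v r) * A $$ (r,s) * v s)"

lemma qf_split: "qf (n*k) A v = (\<Sum>p<n. \<Sum>a<k. \<Sum>q<n. \<Sum>b<k. cnj (v (p*k+a)) * A $$ (p*k+a, q*k+b) * v (q*k+b))"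
  unfolding qf_def by (simp add: sum_split)

lemma psd_qf: "psd n A \<longleftrightarrow> A \<in> carrier_mat n n \<and> (\<forall>v. \<exists>r::real. r \<ge> 0 \<and> qf n A v = complex_of_real r)"
  unfolding psd_def qf_def by simp


lemma mi: "x * (if P then y else 0) = (if P then x * y else 0)" "(if P then y else 0) * x = (if P then y * x else 0)" for x y :: complex
  by auto
lemma ci: "cnj (if P then y else 0) = (if P then cnj y else 0)" by auto
lemma sum_if_const: "(\<Sum>x\<in>A. if P then f x else 0) = (if P then sum f A else 0)" by auto

lemma T4_cp: "completely_positive 4 T4"
  unfolding completely_positive_def
proof (intro allI impI)
  fix k X assume psdX: "psd (4*k) X"
  show "psd (4*k) (tensor_id 4 k T4 X)"
  proof (cases "k = 0")
    case True
    thus ?thesis unfolding psd_def tensor_id_def by simp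
  next
    case False
    hence k: "k > 0" by simp
    define Y where "Y = tensor_id 4 k T4 X"
    have divk: "(p*k+a) div k = p" "(p*k+a) mod k = a" if "a < k" for p a
      using that k by auto
    have lt: "p*k+a < 4*k" if "p < 4" "a < k" for p a
    proof -
      have "p*k+a < p*k + k" using that by simp
      also have "\<dots> = (p+1)*k" by simp
      also have "\<dots> \<le> 4*k" using that by (intro mult_right_mono) auto
      finally show ?thesis .
    qed
    have Ye: "Y $$ (p*k+a, q*k+b) = (if p = q then X $$ (swp p * k + a, swp p * k + b) else 0)"
      if "p < 4" "q < 4" "a < k" "b < k" for p q a b
      using that lt[OF that(1,3)] lt[OF that(2,4)] swp_lt[OF that(1)]
      unfolding Y_def tensor_id_def T4_def by (auto simp: divk)
    have qfY: "qf (4*k) Y v = (\<Sum>p<4. \<Sum>a<k. \<Sum>b<k. cnj (v (p*k+a)) * X $$ (swp p * k + a, swp p * k + b) * v (p*k+b))" for v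
    proof -
      have "qf (4*k) Y v = (\<Sum>p<4. \<Sum>a<k. \<Sum>q<4. \<Sum>b<k. cnj (v (p*k+a)) * Y $$ (p*k+a, q*k+b) * v (q*k+b))"
        by (rule qf_split)
      also have "\<dots> = (\<Sum>p<4. \<Sum>a<k. \<Sum>q<4. if q = p then (\<Sum>b<k. cnj (v (p*k+a)) * X $$ (swp p * k + a, swp p * k + b) * v (p*k+b)) else 0)"
        by (intro sum.cong refl) (auto simp: Ye)
      also have "\<dots> = (\<Sum>p<4. \<Sum>a<k. \<Sum>b<k. cnj (v (p*k+a)) * X $$ (swp p * k + a, swp p * k + b) * v (p*k+b))"
        by simp
      finally show ?thesis .
    qed
    define w :: "(nat \<Rightarrow> complex) \<Rightarrow> nat \<Rightarrow> nat \<Rightarrow> complex" where "w v p r = (if r div k = swp p then v (p*k + r mod k) else 0)" for v p r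
    have qfX: "qf (4*k) X (w v p) = (\<Sum>a<k. \<Sum>b<k. cnj (v (p*k+a)) * X $$ (swp p * k + a, swp p * k + b) * v (p*k+b))"
      if "p < 4" for v p
    proof -
      have "qf (4*k) X (w v p) = (\<Sum>p'<4. \<Sum>a<k. \<Sum>q<4. \<Sum>b<k. cnj (w v p (p'*k+a)) * X $$ (p'*k+a, q*k+b) * w v p (q*k+b))"
        by (rule qf_split)
      also have "\<dots> = (\<Sum>a<k. \<Sum>b<k. cnj (v (p*k+a)) * X $$ (swp p * k + a, swp p * k + b) * v (p*k+b))"
        using swp_lt[OF that] by (simp add: w_def divk mi ci sum_if_const cong: if_cong)
      finally show ?thesis .
    qed
    show ?thesis unfolding psd_qf Y_def[symmetric]
    proof (intro conjI allI)
      show "Y \<in> carrier_mat (4*k) (4*k)" unfolding Y_def tensor_id_def by simp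
      fix v
      have "\<forall>p. \<exists>r::real. r \<ge> 0 \<and> qf (4*k) X (w v p) = complex_of_real r"
        using psdX unfolding psd_qf by blast
      then obtain rr where rr: "\<And>p. rr p \<ge> 0" "\<And>p. qf (4*k) X (w v p) = complex_of_real (rr p)"
        by metis
      have "qf (4*k) Y v = (\<Sum>p<4. qf (4*k) X (w v p))" unfolding qfY by (intro sum.cong refl) (simp add: qfX)
      also have "\<dots> = complex_of_real (\<Sum>p<4. rr p)" by (simp add: rr(2))
      finally show "\<exists>r::real. r \<ge> 0 \<and> qf (4*k) Y v = complex_of_real r"
        using rr(1) by (intro exI[of _ "\<Sum>p<4. rr p"]) (auto intro: sum_nonneg)
    qed
  qed
qed

lemma T4_CPTP: "CPTP 4 T4"
  unfolding CPTP_def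
proof (intro conjI T4_cp)
  show "lin_map_Md 4 T4" unfolding lin_map_Md_def
  proof (intro conjI ballI allI)
    fix X :: "complex mat" assume "X \<in> carrier_mat 4 4"
    show "T4 X \<in> carrier_mat 4 4" unfolding T4_def by simp
  next
    fix X Y :: "complex mat" assume X: "X \<in> carrier_mat 4 4" and Y: "Y \<in> carrier_mat 4 4"
    show "T4 (X + Y) = T4 X + T4 Y" unfolding T4_def
      by (rule eq_matI) (use X Y swp_lt in auto)
  next
    fix c :: complex and X :: "complex mat" assume X: "X \<in> carrier_mat 4 4"
    show "T4 (c \<cdot>\<^sub>m X) = c \<cdot>\<^sub>m T4 X" unfolding T4_def
      by (rule eq_matI) (use X swp_lt in auto)
  qed
  show "trace_preserving 4 T4" unfolding trace_preserving_def
    by (simp add: sum4 T4_def swp_def)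
qed


theorem mainTheorem12:
  shows "(\<not> (\<exists>T. CPTP 2 T \<and> spec_op 2 T = {#1, 1, 1, -1#})) \<and>
         (\<exists>T. CPTP 4 T \<and> filter_mset (\<lambda>z. z \<noteq> 0) (spec_op 4 T) = {#1, 1, 1, -1#})"
  using part1 T4_CPTP spec_T4 by blast

end
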